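(* For an integer $i\ge0$ let $i_0i_1i_2\dots$ be its base-3 digits, least significant first. Define $w_i=-1$ if the first digit in this sequence different from $1$ is $2$, and $w_i=1$ otherwise; define $a_i=3^{m}$, where $m$ is the number of initial digits equal to $1$, i.e. the largest $m\ge0$ with $i_0=\dots=i_{m-1}=1$. Let $p_0=0$ and $p_n=\sum_{i=0}^{n-1}w_ia_i$ for $n\ge1$. Let $N_2$ be the set of non-negative integers whose base-3 representation does not use the digit $2$, and for $n\ge0$ let $\ell_n=\ell_n^++\ell_n^-$, where $\ell_n^+,\ell_n^-$ are the unique non-negative integers with $\ell_n^+,\ell_n^-,\ell_n^++\ell_n^-\in N_2$ and $n=\ell_n^+-\ell_n^-$. Then $p_n=\ell_n$ for all $n\ge0$.
   Context: The sequence $(w_i)$ is the sequence $1,1,-1,1,1,-1,1,-1,-1,\dots$ (the final-state output of a ternary automaton), and $(a_i)$ is the sequence $1,3,1,1,9,1,\dots$ (a transducer integer sequence); the definitions above are the explicit descriptions of these. *)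

theory Defs
  imports Main
begin

definition digit3 :: "nat \<Rightarrow> nat \<Rightarrow> nat" where
  "digit3 i k = (i div 3 ^ k) mod 3"

definition ones_prefix :: "nat \<Rightarrow> nat" where
  "ones_prefix i = (LEAST k. digit3 i k \<noteq> 1)"

definition w :: "nat \<Rightarrow> int" where
  "w i = (if digit3 i (ones_prefix i) = 2 then -1 else 1)"

definition a :: "nat \<Rightarrow> int" where
  "a i = 3 ^ ones_prefix i"

definition p :: "nat \<Rightarrow> int" where
  "p n = (\<Sum>i<n. w i * a i)"

definition N2 :: "nat set" where
  "N2 = {x. \<forall>k. digit3 x k \<noteq> 2}"

definition ell_pair :: "nat \<Rightarrow> nat \<times> nat" where
  "ell_pair n = (THE (lp, lm). lp \<in> N2 \<and> lm \<in> N2 \<and> lp + lm \<in> N2 \<and> int n = int lp - int lm)"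

definition ell :: "nat \<Rightarrow> nat" where
  "ell n = fst (ell_pair n) + snd (ell_pair n)"

end

theory Submission
  imports Defs
begin

lemma digit0: "digit3 i 0 = i mod 3" by (simp add: digit3_def)
lemma digitSuc: "digit3 i (Suc k) = digit3 (i div 3) k"
  by (simp add: digit3_def div_mult2_eq mult.commute)

lemma digit_big: "digit3 i i = 0"
proof -
  have "i < 3 ^ i" by (induction i) auto
  thus ?thesis by (simp add: digit3_def)
qed

lemma op_not1: "i mod 3 \<noteq> 1 \<Longrightarrow> ones_prefix i = 0"
  unfolding ones_prefix_def by (rule Least_eq_0) (simp add: digit0)

lemma op_1: "i mod 3 = 1 \<Longrightarrow> ones_prefix i = Suc (ones_prefix (i div 3))"
  unfolding ones_prefix_def
  apply (subst Least_Suc[of _ i])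
    apply (simp add: digit_big)
   apply (simp add: digit0)
  apply (simp add: digitSuc)
  done

lemma d_0: "i mod 3 = 0 \<Longrightarrow> w i * a i = 1"
  using op_not1[of i] by (simp add: w_def a_def digit0)
lemma d_2: "i mod 3 = 2 \<Longrightarrow> w i * a i = -1"
  using op_not1[of i] by (simp add: w_def a_def digit0)
lemma d_1: "i mod 3 = 1 \<Longrightarrow> w i * a i = 3 * (w (i div 3) * a (i div 3))"
  using op_1[of i] by (simp add: w_def a_def digitSuc)

lemma N2_iff: "x \<in> N2 \<longleftrightarrow> x mod 3 \<noteq> 2 \<and> x div 3 \<in> N2"
  unfolding N2_def
  apply safe
    apply (metis digit0)
   apply (metis digitSuc)
  by (metis digit0 digitSuc not0_implies_Suc)

lemma N2_0: "0 \<in> N2" by (simp add: N2_def digit3_def)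

function P :: "nat \<Rightarrow> nat \<times> nat" where
  "P n = (if n = 0 then (0,0)
     else if n mod 3 = 0 then (3 * fst (P (n div 3)), 3 * snd (P (n div 3)))
     else if n mod 3 = 1 then (3 * fst (P (n div 3)) + 1, 3 * snd (P (n div 3)))
     else (3 * fst (P (n div 3 + 1)), 3 * snd (P (n div 3 + 1)) + 1))"
  by auto
termination
  by (relation "measure id") auto

declare P.simps[simp del]

lemma P0: "P 0 = (0,0)" by (subst P.simps) simp

lemma aux3[simp]: "Suc (3*x) div 3 = x" "Suc (3*x) mod 3 = 1"
  "Suc (3*x+3*y) div 3 = x+y" "Suc (3*x+3*y) mod 3 = 1"
  "(3*x+3*y) div 3 = x+y" "(3*x+3*y) mod 3 = 0" by presburger+

definition good :: "nat \<Rightarrow> nat \<Rightarrow> bool" where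
  "good lp lm \<longleftrightarrow> lp \<in> N2 \<and> lm \<in> N2 \<and> lp + lm \<in> N2"

lemma P_good: "good (fst (P n)) (snd (P n)) \<and> int n = int (fst (P n)) - int (snd (P n))"
proof (induction n rule: P.induct)
  case (1 n)
  show ?case
  proof (cases "n = 0")
    case True thus ?thesis by (simp add: P0 good_def N2_0)
  next
    case False
    have nn: "int n = 3 * int (n div 3) + int (n mod 3)" using div_mult_mod_eq[of n 3] by linarith
    consider "n mod 3 = 0" | "n mod 3 = 1" | "n mod 3 = 2" by linarith
    thus ?thesis
    proof cases
      case 1
      from False 1 "1.IH"(1) have IH: "good (fst (P (n div 3))) (snd (P (n div 3)))"
        "int (n div 3) = int (fst (P (n div 3))) - int (snd (P (n div 3)))" by simp_all
      have e: "P n = (3 * fst (P (n div 3)), 3 * snd (P (n div 3)))"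
        using False 1 by (subst P.simps) simp
      show ?thesis using IH 1 nn unfolding e good_def
        by (subst (1 2 3) N2_iff) simp
    next
      case 2
      have n0: "n mod 3 \<noteq> 0" using 2 by simp
      have IH: "good (fst (P (n div 3))) (snd (P (n div 3)))"
        "int (n div 3) = int (fst (P (n div 3))) - int (snd (P (n div 3)))"
        using "1.IH" False n0 2 by blast+
      have e: "P n = (3 * fst (P (n div 3)) + 1, 3 * snd (P (n div 3)))"
        using False 2 by (subst P.simps) simp
      show ?thesis using IH 2 nn unfolding e good_def
        by (subst (1 2 3) N2_iff) simp
    next
      case 3
      have n0: "n mod 3 \<noteq> 0" "n mod 3 \<noteq> 1" using 3 by simp_all
      have IH: "good (fst (P (n div 3 + 1))) (snd (P (n div 3 + 1)))"
        "int (n div 3 + 1) = int (fst (P (n div 3 + 1))) - int (snd (P (n div 3 + 1)))"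
        using "1.IH" False n0 by blast+
      have e: "P n = (3 * fst (P (n div 3 + 1)), 3 * snd (P (n div 3 + 1)) + 1)"
        using False 3 by (subst P.simps) simp
      show ?thesis using IH 3 nn unfolding e good_def
        by (subst (1 2 3) N2_iff) simp
    qed
  qed
qed

lemma P_3: "n mod 3 = 0 \<Longrightarrow> n > 0 \<Longrightarrow> P n = (3 * fst (P (n div 3)), 3 * snd (P (n div 3)))"
  by (subst P.simps) simp
lemma P_31: "n mod 3 = 1 \<Longrightarrow> P n = (3 * fst (P (n div 3)) + 1, 3 * snd (P (n div 3)))"
  by (subst P.simps) simp
lemma P_32: "n mod 3 = 2 \<Longrightarrow> P n = (3 * fst (P (n div 3 + 1)), 3 * snd (P (n div 3 + 1)) + 1)"
  by (subst P.simps) simp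

lemma dm: "int n = 3*x + r \<Longrightarrow> 0 \<le> r \<Longrightarrow> r < 3 \<Longrightarrow> int (n div 3) = x \<and> int (n mod 3) = r"
  by presburger
lemma dm2: "(x::nat) = 3 * (x div 3) + x mod 3" by simp

lemma linz: "(x::nat) = 3*u + v \<Longrightarrow> int x = 3*int u + int v" by simp
lemma lin: "(N::int) = Pp - M \<Longrightarrow> Pp = 3*A + r1 \<Longrightarrow> M = 3*B + r2 \<Longrightarrow> N = 3*(A-B) + (r1 - r2)"
  by simp
lemma e3: "x mod 3 = c \<Longrightarrow> 3*(x div 3) + c = (x::nat)" by (metis dm2)
lemma k01: "(k::nat) < 3 \<Longrightarrow> k \<noteq> 2 \<Longrightarrow> k = 0 \<or> k = 1" by auto
lemma xy01: "(x::nat) = 0 \<or> x = 1 \<Longrightarrow> y = 0 \<or> y = 1 \<Longrightarrow> \<not>(x=1 \<and> y=1) \<Longrightarrow> (x+y) div 3 = 0" by auto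
lemma ltd: "(u::nat) + v \<noteq> 0 \<Longrightarrow> u div 3 + v div 3 < u + v" by linarith

lemma P_unique:
  "\<And>lp lm. lp + lm = s \<Longrightarrow> good lp lm \<Longrightarrow> int n = int lp - int lm \<Longrightarrow> (lp, lm) = P n"
proof (induction s arbitrary: n rule: less_induct)
  case (less s lp lm n)
  show ?case
  proof (cases "s = 0")
    case True thus ?thesis using less by (simp add: P0)
  next
    case False
    have g0: "lp \<in> N2" "lm \<in> N2" "lp + lm \<in> N2" using less(3) unfolding good_def by simp_all
    have g: "lp mod 3 \<noteq> 2" "lm mod 3 \<noteq> 2" "(lp + lm) mod 3 \<noteq> 2"
      using g0 N2_iff by blast+
    have s3: "(lp+lm) mod 3 = (lp mod 3 + lm mod 3) mod 3" by (simp add: mod_add_eq)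
    have lt3: "lp mod 3 < 3" "lm mod 3 < 3" by simp_all
    have m01: "lp mod 3 = 0 \<or> lp mod 3 = 1" "lm mod 3 = 0 \<or> lm mod 3 = 1" using k01 g lt3 by blast+
    have n11: "\<not> (lp mod 3 = 1 \<and> lm mod 3 = 1)" using s3 g(3) by auto
    have "(lp mod 3 + lm mod 3) div 3 = 0" using xy01[OF m01 n11] .
    hence "(lp + lm) div 3 = lp div 3 + lm div 3" using div_add1_eq[of lp lm 3] by (metis add_0_right)
    hence g4: "good (lp div 3) (lm div 3)" using g0 N2_iff[of lp] N2_iff[of lm] N2_iff[of "lp+lm"]
      unfolding good_def by simp
    have lt: "lp div 3 + lm div 3 < s" using False less(2) ltd by blast
    have IH: "int m = int (lp div 3) - int (lm div 3) \<Longrightarrow> (lp div 3, lm div 3) = P m" for m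
      using less(1)[OF lt refl g4] .
    have dl: "int lp = 3 * int (lp div 3) + int (lp mod 3)" "int lm = 3 * int (lm div 3) + int (lm mod 3)"
      using linz[OF dm2[of lp]] linz[OF dm2[of lm]] by simp_all
    consider "lp mod 3 = 0" "lm mod 3 = 0" | "lp mod 3 = 1" "lm mod 3 = 0"
      | "lp mod 3 = 0" "lm mod 3 = 1"
      using m01 n11 by argo
    thus ?thesis
    proof cases
      case 1
      have nd: "int (n div 3) = int (lp div 3) - int (lm div 3)" "n mod 3 = 0"
        proof -
        have m: "int (lp mod 3) = 0" "int (lm mod 3) = 0" using 1 by simp_all
        have q: "int n = 3 * (int (lp div 3) - int (lm div 3)) + 0" using lin[OF less(4) dl] m by (simp add: algebra_simps)
        from dm[OF q] show "int (n div 3) = int (lp div 3) - int (lm div 3)" "n mod 3 = 0" by simp_all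
      qed
      note h = IH[OF nd(1)]
      show ?thesis
      proof (cases "n = 0")
        case True
        with h have "lp div 3 = 0" "lm div 3 = 0" by (simp_all add: P0)
        with e3[OF 1(1)] e3[OF 1(2)] have "lp = 0" "lm = 0" by simp_all
        with False less(2) show ?thesis by simp
      next
        case nz: False
        have hf: "fst (P (n div 3)) = lp div 3" "snd (P (n div 3)) = lm div 3" using h by (metis fst_conv, metis snd_conv)
        have e: "3 * (lp div 3) = lp" "3 * (lm div 3) = lm" using e3[OF 1(1)] e3[OF 1(2)] by simp_all
        have npos: "n > 0" using nz by simp
        show ?thesis by (simp only: P_3[OF nd(2) npos] hf e)
      qed
    next
      case 2
      have nd: "int (n div 3) = int (lp div 3) - int (lm div 3)" "n mod 3 = 1"
        proof -
        have m: "int (lp mod 3) = 1" "int (lm mod 3) = 0" using 2 by simp_all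
        have q: "int n = 3 * (int (lp div 3) - int (lm div 3)) + 1" using lin[OF less(4) dl] m by (simp add: algebra_simps)
        from dm[OF q] show "int (n div 3) = int (lp div 3) - int (lm div 3)" "n mod 3 = 1" by simp_all
      qed
      note h = IH[OF nd(1)]
      have hf: "fst (P (n div 3)) = lp div 3" "snd (P (n div 3)) = lm div 3" using h by (metis fst_conv, metis snd_conv)
      have e: "3 * (lp div 3) + 1 = lp" "3 * (lm div 3) = lm" using e3[OF 2(1)] e3[OF 2(2)] by simp_all
      show ?thesis by (simp only: P_31[OF nd(2)] hf e)
    next
      case 3
      have nd: "int (n div 3 + 1) = int (lp div 3) - int (lm div 3)" "n mod 3 = 2"
        proof -
        have m: "int (lp mod 3) = 0" "int (lm mod 3) = 1" using 3 by simp_all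
        have q: "int n = 3 * (int (lp div 3) - int (lm div 3) - 1) + 2" using lin[OF less(4) dl] m by (simp add: algebra_simps)
        from dm[OF q] show "int (n div 3 + 1) = int (lp div 3) - int (lm div 3)" "n mod 3 = 2" by simp_all
      qed
      note h = IH[OF nd(1)]
      have hf: "fst (P (n div 3 + 1)) = lp div 3" "snd (P (n div 3 + 1)) = lm div 3" using h by (metis fst_conv, metis snd_conv)
      have e: "3 * (lp div 3) = lp" "3 * (lm div 3) + 1 = lm" using e3[OF 3(1)] e3[OF 3(2)] by simp_all
      show ?thesis by (simp only: P_32[OF nd(2)] hf e)
    qed
  qed
qed

lemma ell_P: "ell n = fst (P n) + snd (P n)"
proof -
  have "ell_pair n = P n"
    unfolding ell_pair_def
  proof (rule the_equality)
    show "case P n of (lp, lm) \<Rightarrow> lp \<in> N2 \<and> lm \<in> N2 \<and> lp + lm \<in> N2 \<and> int n = int lp - int lm"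
      using P_good[of n] by (cases "P n") (simp add: good_def)
  next
    fix x assume "case x of (lp, lm) \<Rightarrow> lp \<in> N2 \<and> lm \<in> N2 \<and> lp + lm \<in> N2 \<and> int n = int lp - int lm"
    thus "x = P n" using P_unique by (cases x) (auto simp: good_def)
  qed
  thus ?thesis by (simp add: ell_def)
qed

definition L :: "nat \<Rightarrow> int" where "L n = int (fst (P n) + snd (P n))"

lemma L0: "L 0 = 0" by (simp add: L_def P0)
lemma L_3: "n mod 3 = 0 \<Longrightarrow> L n = 3 * L (n div 3)"
  by (cases "n = 0") (simp_all add: L0 L_def P_3 P0)
lemma L_31: "n mod 3 = 1 \<Longrightarrow> L n = 3 * L (n div 3) + 1"
  by (simp add: L_def P_31)
lemma L_32: "n mod 3 = 2 \<Longrightarrow> L n = 3 * L (n div 3 + 1) + 1"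
  by (simp add: L_def P_32 del: One_nat_def)

lemma d_L: "w n * a n = L (Suc n) - L n"
proof (induction n rule: less_induct)
  case (less n)
  consider "n mod 3 = 0" | "n mod 3 = 1" | "n mod 3 = 2" by linarith
  thus ?case
  proof cases
    case 1
    have "Suc n mod 3 = 1" "Suc n div 3 = n div 3" using 1 by presburger+
    thus ?thesis using 1 d_0[of n] L_3[of n] L_31[of "Suc n"] by simp
  next
    case 2
    have lt: "n div 3 < n" using 2 by simp
    have "Suc n mod 3 = 2" "Suc n div 3 = n div 3" "Suc (n div 3) = n div 3 + 1" using 2 by presburger+
    thus ?thesis using 2 d_1[of n] L_31[of n] L_32[of "Suc n"] less[OF lt] by simp
  next
    case 3
    have "Suc n mod 3 = 0" "Suc n div 3 = n div 3 + 1" using 3 by presburger+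
    thus ?thesis using 3 d_2[of n] L_32[of n] L_3[of "Suc n"] by simp
  qed
qed

theorem mainTheorem7:
  shows "\<forall>n. p n = int (ell n)"
proof
  fix n
  have "p n = L n"
    by (induction n) (simp_all add: p_def L0 d_L)
  thus "p n = int (ell n)" by (simp add: ell_P L_def)
qed

end
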